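(* Assume $d_Y\ge2$. Let $\mathcal T$ be the set of $\mathcal Y$-valued transition matrices on $\mathcal X$, viewed as a convex subset of $\mathbb R^{\mathcal Y\times\mathcal X\times\mathcal X}$ with nonempty interior in its affine hull, equipped with the Lebesgue measure of that affine hull, and let $\Delta_{\mathcal X}$ be the probability simplex on $\mathcal X$ with its Lebesgue measure. Then for almost every $(\vec W,P)\in\mathcal T\times\Delta_{\mathcal X}$ one has $K_{\vec W}=\{0\}$ and $\mathcal V^{k_{(P,\vec W)}}(P)=\mathcal V_{\mathcal X}$. Moreover, for almost every $\vec W\in\mathcal T$ (such $\vec W$ being irreducible almost everywhere) one has $K_{\vec W}=\{0\}$ and $\mathcal V^{k_{(P_{\vec W},\vec W)}}(P_{\vec W})=\mathcal V_{\mathcal X}$.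
   Context: Let $\mathcal X=\{1,\dots,d\}$, $\mathcal Y=\{1,\dots,d_Y\}$ be finite sets, $\mathcal V_{\mathcal X}=\mathbb R^{\mathcal X}$ (column vectors; distributions are regarded as vectors in it), $u_{\mathcal X}$ the all-ones vector. A $\mathcal Y$-valued transition matrix on $\mathcal X$ is a family $\vec W=(W_y)_{y\in\mathcal Y}$ of $d\times d$ nonnegative matrices $W_y(x|x')$ ($x$ row, $x'$ column) with $|\vec W|:=\sum_yW_y$ column-stochastic; it is irreducible if $|\vec W|$ is, and then $P_{\vec W}$ is the unique probability vector with $|\vec W|P_{\vec W}=P_{\vec W}$. For $k\ge1$, $P^k[\vec W]:\mathcal V_{\mathcal X}\to\mathbb R^{\mathcal Y^k}$, $(P^k[\vec W]v)(y_k,\dots,y_1)=u_{\mathcal X}^TW_{y_k}\cdots W_{y_1}v$. $k_{\vec W}$ is the least $k_0\ge1$ with $\bigcap_{k\ge1}\operatorname{Ker}P^k[\vec W]=\operatorname{Ker}P^{k_0}[\vec W]$; $K_{\vec W}:=\operatorname{Ker}P^{k_{\vec W}}[\vec W]$; $[v]$ is the class of $v$ in $\mathcal V_{\mathcal X}/K_{\vec W}$. For a distribution $P$ and $k\ge0$, $\mathcal V^k(P)$ is the subspace of $\mathcal V_{\mathcal X}/K_{\vec W}$ spanned by $[W_{y_{k'}}\cdots W_{y_1}P]$, $0\le k'\le k$, $y_i\in\mathcal Y$. $k_{(P,\vec W)}$ is the least $k_1\ge1$ with $\bigcup_{k\ge1}\mathcal V^k(P)=\mathcal V^{k_1}(P)$.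 (When $K_{\vec W}=\{0\}$ the quotient is identified with $\mathcal V_{\mathcal X}$.) *)

theory Defs
  imports "HOL-Analysis.Analysis"
begin

text \<open>Y-valued transition matrices on X. The index sets are finite types 'x, 'y;
  W y $ x $ x' is the entry W_y(x|x') (row x, column x').\<close>

definition abs_tm :: "('y::finite \<Rightarrow> real^'x::finite^'x) \<Rightarrow> real^'x^'x" where
  "abs_tm W = (\<Sum>y\<in>UNIV. W y)"

definition transition_matrix :: "('y::finite \<Rightarrow> real^'x::finite^'x) \<Rightarrow> bool" where
  "transition_matrix W \<longleftrightarrow>
     (\<forall>y x x'. 0 \<le> W y $ x $ x') \<and> (\<forall>x'. (\<Sum>x\<in>UNIV. abs_tm W $ x $ x') = 1)"

definition mpow :: "real^'x::finite^'x \<Rightarrow> nat \<Rightarrow> real^'x^'x" where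
  "mpow A k = ((\<lambda>B. A ** B) ^^ k) (mat 1)"

definition irreducible_mat :: "real^'x::finite^'x \<Rightarrow> bool" where
  "irreducible_mat A \<longleftrightarrow> (\<forall>i j. \<exists>k. 0 < mpow A k $ i $ j)"

definition irreducible_tm :: "('y::finite \<Rightarrow> real^'x::finite^'x) \<Rightarrow> bool" where
  "irreducible_tm W \<longleftrightarrow> irreducible_mat (abs_tm W)"

definition prob_vec :: "real^'x::finite \<Rightarrow> bool" where
  "prob_vec P \<longleftrightarrow> (\<forall>x. 0 \<le> P $ x) \<and> (\<Sum>x\<in>UNIV. P $ x) = 1"

text \<open>Stationary distribution P_W (meaningful for irreducible W).\<close>
definition stationary :: "('y::finite \<Rightarrow> real^'x::finite^'x) \<Rightarrow> real^'x" where
  "stationary W = (THE P. prob_vec P \<and> abs_tm W *v P = P)"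

fun wprod :: "('y \<Rightarrow> real^'x::finite^'x) \<Rightarrow> 'y list \<Rightarrow> real^'x^'x" where
  "wprod W [] = mat 1"
| "wprod W (y # ys) = W y ** wprod W ys"

definition Pk :: "('y \<Rightarrow> real^'x::finite^'x) \<Rightarrow> nat \<Rightarrow> real^'x \<Rightarrow> ('y list \<Rightarrow> real)" where
  "Pk W k v = (\<lambda>ys. if length ys = k then (\<Sum>x\<in>UNIV. (wprod W ys *v v) $ x) else 0)"

definition kerP :: "('y \<Rightarrow> real^'x::finite^'x) \<Rightarrow> nat \<Rightarrow> (real^'x) set" where
  "kerP W k = {v. Pk W k v = (\<lambda>_. 0)}"

definition kW :: "('y \<Rightarrow> real^'x::finite^'x) \<Rightarrow> nat" where
  "kW W = (LEAST k0. 1 \<le> k0 \<and> (\<Inter>k\<in>{1..}. kerP W k) = kerP W k0)"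

definition KW :: "('y \<Rightarrow> real^'x::finite^'x) \<Rightarrow> (real^'x) set" where
  "KW W = kerP W (kW W)"

text \<open>V^k(P), a subspace of the quotient V_X / K_W, is represented by its preimage
  in V_X (a subspace containing K_W).\<close>
definition Vk :: "('y \<Rightarrow> real^'x::finite^'x) \<Rightarrow> real^'x \<Rightarrow> nat \<Rightarrow> (real^'x) set" where
  "Vk W P k = span ((\<lambda>ys. wprod W ys *v P) ` {ys. length ys \<le> k} \<union> KW W)"

definition kPW :: "real^'x::finite \<Rightarrow> ('y \<Rightarrow> real^'x^'x) \<Rightarrow> nat" where
  "kPW P W = (LEAST k1. 1 \<le> k1 \<and> (\<Union>k\<in>{1..}. Vk W P k) = Vk W P k1)"

text \<open>The affine hull of the set of transition matrices is parametrised by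
  all entries except W_{y0}(x0|x'), which is determined by column-stochasticity;
  the simplex is parametrised by all coordinates except P(x0).\<close>
definition tm_coords :: "'y \<Rightarrow> 'x \<Rightarrow> ('y \<times> 'x \<times> 'x) set" where
  "tm_coords y0 x0 = {(y, x, x'). (y, x) \<noteq> (y0, x0)}"

definition tm_of :: "'y::finite \<Rightarrow> 'x::finite \<Rightarrow> ('y \<times> 'x \<times> 'x \<Rightarrow> real) \<Rightarrow> ('y \<Rightarrow> real^'x^'x)" where
  "tm_of y0 x0 \<theta> = (\<lambda>y. \<chi> x x'. if (y, x) = (y0, x0)
      then 1 - (\<Sum>p\<in>UNIV - {(y0, x0)}. \<theta> (fst p, snd p, x'))
      else \<theta> (y, x, x'))"

definition dist_of :: "'x::finite \<Rightarrow> ('x \<Rightarrow> real) \<Rightarrow> real^'x" where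
  "dist_of x0 q = (\<chi> x. if x = x0 then 1 - (\<Sum>z\<in>UNIV - {x0}. q z) else q x)"

end

theory Submission
  imports Defs "HOL-Computational_Algebra.Polynomial"
begin


inductive_set polyfun :: "('a \<Rightarrow> real) set \<Rightarrow> ('a \<Rightarrow> real) set" for V where
  pconst: "(\<lambda>_. c) \<in> polyfun V"
| pvar: "v \<in> V \<Longrightarrow> v \<in> polyfun V"
| padd: "f \<in> polyfun V \<Longrightarrow> g \<in> polyfun V \<Longrightarrow> (\<lambda>x. f x + g x) \<in> polyfun V"
| pmult: "f \<in> polyfun V \<Longrightarrow> g \<in> polyfun V \<Longrightarrow> (\<lambda>x. f x * g x) \<in> polyfun V"

lemma polyfun_sum: "finite A \<Longrightarrow> (\<And>a. a \<in> A \<Longrightarrow> f a \<in> polyfun V) \<Longrightarrow> (\<lambda>x. \<Sum>a\<in>A. f a x) \<in> polyfun V"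
  by (induction A rule: finite_induct) (auto intro: polyfun.intros)

lemma polyfun_prod: "finite A \<Longrightarrow> (\<And>a. a \<in> A \<Longrightarrow> f a \<in> polyfun V) \<Longrightarrow> (\<lambda>x. \<Prod>a\<in>A. f a x) \<in> polyfun V"
  by (induction A rule: finite_induct) (auto intro: polyfun.intros)

lemma polyfun_diff: "f \<in> polyfun V \<Longrightarrow> g \<in> polyfun V \<Longrightarrow> (\<lambda>x. f x - g x) \<in> polyfun V"
proof -
  assume a: "f \<in> polyfun V" "g \<in> polyfun V"
  have "(\<lambda>x. f x + (-1) * g x) \<in> polyfun V" by (intro polyfun.intros a)
  then show ?thesis by simp
qed

lemma polyfun_comp:
  assumes "f \<in> polyfun V" "\<And>v. v \<in> V \<Longrightarrow> (\<lambda>x. v (g x)) \<in> polyfun V'"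
  shows "(\<lambda>x. f (g x)) \<in> polyfun V'"
  using assms(1) by induction (auto intro: polyfun.intros assms(2))

lemma polyfun_meas:
  assumes "f \<in> polyfun V" "\<And>v. v \<in> V \<Longrightarrow> v \<in> borel_measurable M"
  shows "f \<in> borel_measurable M"
  using assms(1) by induction (auto intro: assms(2))

lemma polyfun_indep:
  assumes "f \<in> polyfun ((\<lambda>j \<theta>. \<theta> j) ` I)" "i \<notin> I"
  shows "f (\<theta>(i:=t)) = f \<theta>"
  using assms(1) by induction (use assms(2) in auto)

lemma polyfun_empty:
  assumes "f \<in> polyfun ((\<lambda>j \<theta>. \<theta> j) ` {})"
  shows "f a = f b"
  using assms by induction auto

lemma polyfun_decomp:
  assumes "f \<in> polyfun ((\<lambda>j \<theta>. \<theta> j) ` insert i I)"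
  shows "\<exists>Q. (\<forall>k. (\<lambda>\<theta>. coeff (Q \<theta>) k) \<in> polyfun ((\<lambda>j \<theta>. \<theta> j) ` I)) \<and> (\<forall>\<theta>. f \<theta> = poly (Q \<theta>) (\<theta> i))"
  using assms
proof induction
  case (pconst c)
  show ?case
    by (rule exI[of _ "\<lambda>_. [:c:]"]) (auto simp: coeff_pCons split: nat.splits intro: polyfun.intros)
next
  case (pvar v)
  then obtain j where j: "j \<in> insert i I" "v = (\<lambda>\<theta>. \<theta> j)" by auto
  show ?case
  proof (cases "j = i")
    case True
    show ?thesis
      by (rule exI[of _ "\<lambda>_. [:0, 1:]"]) (auto simp: j True coeff_pCons split: nat.splits intro: polyfun.intros)
  next
    case False
    with j have "j \<in> I" by auto
    show ?thesis
      apply (rule exI[of _ "\<lambda>\<theta>. [:\<theta> j:]"])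
      apply (intro conjI allI)
      subgoal for k using \<open>j \<in> I\<close> by (cases k) (auto intro: polyfun.intros)
      by (auto simp: j)
  qed
next
  case (padd f g)
  then obtain Q1 Q2 where Q: "\<forall>k. (\<lambda>\<theta>. coeff (Q1 \<theta>) k) \<in> polyfun ((\<lambda>j \<theta>. \<theta> j) ` I)" "\<forall>\<theta>. f \<theta> = poly (Q1 \<theta>) (\<theta> i)"
    "\<forall>k. (\<lambda>\<theta>. coeff (Q2 \<theta>) k) \<in> polyfun ((\<lambda>j \<theta>. \<theta> j) ` I)" "\<forall>\<theta>. g \<theta> = poly (Q2 \<theta>) (\<theta> i)" by blast
  show ?case
    by (rule exI[of _ "\<lambda>\<theta>. Q1 \<theta> + Q2 \<theta>"]) (auto simp: Q intro: polyfun.intros)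
next
  case (pmult f g)
  then obtain Q1 Q2 where Q: "\<forall>k. (\<lambda>\<theta>. coeff (Q1 \<theta>) k) \<in> polyfun ((\<lambda>j \<theta>. \<theta> j) ` I)" "\<forall>\<theta>. f \<theta> = poly (Q1 \<theta>) (\<theta> i)"
    "\<forall>k. (\<lambda>\<theta>. coeff (Q2 \<theta>) k) \<in> polyfun ((\<lambda>j \<theta>. \<theta> j) ` I)" "\<forall>\<theta>. g \<theta> = poly (Q2 \<theta>) (\<theta> i)" by blast
  show ?case
    apply (rule exI[of _ "\<lambda>\<theta>. Q1 \<theta> * Q2 \<theta>"])
    apply (auto simp: Q coeff_mult intro!: polyfun_sum polyfun.pmult)
    done
qed

lemma proj_meas: "j \<in> I \<Longrightarrow> (\<lambda>\<theta>. \<theta> j) \<in> borel_measurable (PiM I (\<lambda>_. lborel))"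
  by measurable

lemma polyfun_null:
  fixes I :: "'i set"
  assumes "finite I"
  shows "f \<in> polyfun ((\<lambda>j \<theta>. \<theta> j) ` I) \<Longrightarrow> f a \<noteq> 0 \<Longrightarrow>
    {\<theta> \<in> space (PiM I (\<lambda>_. lborel)). f \<theta> = 0} \<in> null_sets (PiM I (\<lambda>_. lborel::real measure))"
  using assms
proof (induction I arbitrary: f a rule: finite_induct)
  case empty
  then have "\<And>b. f b = f a" using polyfun_empty by blast
  with empty have E: "{\<theta> \<in> space (PiM {} (\<lambda>_. lborel)). f \<theta> = 0} = {}" by (metis (mono_tags, lifting) empty_Collect_eq)
  show ?case unfolding E by simp
next
  case (insert i I)
  interpret product_sigma_finite "\<lambda>_::'i. lborel :: real measure"
    by unfold_locales
  obtain Q where Q: "\<And>k. (\<lambda>\<theta>. coeff (Q \<theta>) k) \<in> polyfun ((\<lambda>j \<theta>. \<theta> j) ` I)" "\<And>\<theta>. f \<theta> = poly (Q \<theta>) (\<theta> i)"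
    using polyfun_decomp[OF insert.prems(1)] by blast
  have "Q a \<noteq> 0" using insert.prems(2) Q(2)[of a] by auto
  then obtain k where k: "coeff (Q a) k \<noteq> 0" by (metis leading_coeff_0_iff)
  have nullc: "{\<theta> \<in> space (PiM I (\<lambda>_. lborel)). coeff (Q \<theta>) k = 0} \<in> null_sets (PiM I (\<lambda>_. lborel::real measure))"
    using insert.IH[OF Q(1) k] .
  have fm: "f \<in> borel_measurable (PiM (insert i I) (\<lambda>_. lborel))"
    by (rule polyfun_meas[OF insert.prems(1)]) (auto intro: proj_meas)
  let ?Z = "{\<theta> \<in> space (PiM (insert i I) (\<lambda>_. lborel)). f \<theta> = 0}"
  have Zs: "?Z \<in> sets (PiM (insert i I) (\<lambda>_. lborel))"
    using fm by measurable
  have "emeasure (PiM (insert i I) (\<lambda>_. lborel::real measure)) ?Z = (\<integral>\<^sup>+ \<theta>. indicator ?Z \<theta> \<partial>PiM (insert i I) (\<lambda>_. lborel::real measure))"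
    using Zs by simp
  also have "\<dots> = (\<integral>\<^sup>+ x. (\<integral>\<^sup>+ y. indicator ?Z (x(i := y)) \<partial>lborel) \<partial>(PiM I (\<lambda>_. lborel::real measure)))"
    by (rule product_nn_integral_insert) (use insert Zs in auto)
  also have "\<dots> = (\<integral>\<^sup>+ x. 0 \<partial>(PiM I (\<lambda>_. lborel::real measure)))"
  proof (rule nn_integral_cong_AE)
    have "AE x in PiM I (\<lambda>_. lborel::real measure). x \<notin> {\<theta> \<in> space (PiM I (\<lambda>_. lborel::real measure)). coeff (Q \<theta>) k = 0}"
      by (rule AE_not_in[OF nullc])
    then show "AE x in PiM I (\<lambda>_. lborel::real measure). (\<integral>\<^sup>+ y. indicator ?Z (x(i := y)) \<partial>lborel) = 0"
    proof (rule AE_mp, intro AE_I2 impI)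
      fix x assume x: "x \<in> space (PiM I (\<lambda>_. lborel::real measure))"
        "x \<notin> {\<theta> \<in> space (PiM I (\<lambda>_. lborel::real measure)). coeff (Q \<theta>) k = 0}"
      then have "Q x \<noteq> 0" by auto
      then have fin: "finite {y. poly (Q x) y = 0}" by (rule poly_roots_finite)
      have eq: "\<And>y. Q (x(i:=y)) = Q x"
        using polyfun_indep[OF Q(1) insert.hyps(2)] by (simp add: poly_eq_iff)
      have "(\<integral>\<^sup>+ y. indicator ?Z (x(i := y)) \<partial>lborel) \<le> (\<integral>\<^sup>+ y. indicator {y. poly (Q x) y = 0} y \<partial>lborel)"
        by (rule nn_integral_mono) (auto simp: indicator_def Q(2) eq)
      also have "\<dots> = emeasure lborel {y. poly (Q x) y = 0}"
        using null_setsD2[OF finite_imp_null_set_lborel[OF fin]] by (simp del: nn_integral_indicator add: nn_integral_indicator[symmetric])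
      also have "\<dots> = 0"
        using null_setsD1[OF finite_imp_null_set_lborel[OF fin]] by simp
      finally show "(\<integral>\<^sup>+ y. indicator ?Z (x(i := y)) \<partial>lborel) = 0" by simp
    qed
  qed
  also have "\<dots> = 0" by simp
  finally show ?case using Zs by auto
qed

lemma polyfun_AE:
  fixes I :: "'i set"
  assumes "finite I" "f \<in> polyfun ((\<lambda>j \<theta>. \<theta> j) ` I)" "f a \<noteq> 0"
  shows "AE \<theta> in PiM I (\<lambda>_. lborel::real measure). f \<theta> \<noteq> 0"
  by (rule AE_I'[OF polyfun_null[OF assms(1,2,3)]]) auto

lemma psf: "product_sigma_finite (\<lambda>_::'i. lborel::real measure)"
  by unfold_locales

lemma polyfun_AE_pair:
  fixes I :: "'i set" and J :: "'j set"
  assumes I: "finite I" and J: "finite J"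
    and f: "f \<in> polyfun ((\<lambda>j z. fst z j) ` I \<union> (\<lambda>j z. snd z j) ` J)" and a: "f a \<noteq> 0"
  shows "AE z in PiM I (\<lambda>_. lborel::real measure) \<Otimes>\<^sub>M PiM J (\<lambda>_. lborel::real measure). f z \<noteq> 0"
proof -
  interpret pair_sigma_finite "PiM I (\<lambda>_. lborel::real measure)" "PiM J (\<lambda>_. lborel::real measure)"
    unfolding pair_sigma_finite_def
    using product_sigma_finite.sigma_finite[OF psf I] product_sigma_finite.sigma_finite[OF psf J] by blast
  have fm: "f \<in> borel_measurable (PiM I (\<lambda>_. lborel::real measure) \<Otimes>\<^sub>M PiM J (\<lambda>_. lborel::real measure))"
    by (rule polyfun_meas[OF f]) auto
  have f1: "(\<lambda>x. f (x, snd a)) \<in> polyfun ((\<lambda>j \<theta>. \<theta> j) ` I)"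
    by (rule polyfun_comp[OF f]) (auto intro: polyfun.intros)
  have f2: "\<And>x. (\<lambda>y. f (x, y)) \<in> polyfun ((\<lambda>j \<theta>. \<theta> j) ` J)"
    by (rule polyfun_comp[OF f]) (auto intro: polyfun.intros)
  have "AE x in PiM I (\<lambda>_. lborel::real measure). f (x, snd a) \<noteq> 0"
    by (rule polyfun_AE[OF I f1, of "fst a"]) (use a in simp)
  then have "AE x in PiM I (\<lambda>_. lborel::real measure). AE y in PiM J (\<lambda>_. lborel::real measure). f (x, y) \<noteq> 0"
    by eventually_elim (rule polyfun_AE[OF J f2], simp)
  then show ?thesis
    by (intro AE_pair_measure) (use fm in measurable)
qed




lemma abs_tm_entry: "abs_tm W $ x $ x' = (\<Sum>y\<in>UNIV. W y $ x $ x')"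
  unfolding abs_tm_def by simp

lemma colsum_pairs:
  fixes g :: "'y::finite \<times> 'x::finite \<Rightarrow> real"
  shows "(\<Sum>x\<in>UNIV. \<Sum>y\<in>UNIV. g (y, x)) = g (y0, x0) + (\<Sum>p\<in>UNIV - {(y0, x0)}. g p)"
proof -
  have "(\<Sum>x\<in>UNIV. \<Sum>y\<in>UNIV. g (y, x)) = (\<Sum>y\<in>UNIV. \<Sum>x\<in>UNIV. g (y, x))"
    by (rule sum.swap)
  also have "\<dots> = (\<Sum>p\<in>UNIV. g p)"
    by (simp add: sum.cartesian_product UNIV_Times_UNIV[symmetric] del: UNIV_Times_UNIV)
  also have "\<dots> = g (y0, x0) + (\<Sum>p\<in>UNIV - {(y0, x0)}. g p)"
    by (simp add: sum.remove)
  finally show ?thesis .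
qed

lemma colsum_tm_of: "(\<Sum>x\<in>UNIV. abs_tm (tm_of y0 x0 \<theta>) $ x $ x') = 1"
proof -
  let ?g = "\<lambda>p. tm_of y0 x0 \<theta> (fst p) $ snd p $ x'"
  have "(\<Sum>x\<in>UNIV. abs_tm (tm_of y0 x0 \<theta>) $ x $ x') = (\<Sum>x\<in>UNIV. \<Sum>y\<in>UNIV. ?g (y, x))"
    by (simp add: abs_tm_entry)
  also have "\<dots> = ?g (y0, x0) + (\<Sum>p\<in>UNIV - {(y0, x0)}. ?g p)"
    by (rule colsum_pairs)
  also have "(\<Sum>p\<in>UNIV - {(y0, x0)}. ?g p) = (\<Sum>p\<in>UNIV - {(y0, x0)}. \<theta> (fst p, snd p, x'))"
    by (rule sum.cong) (auto simp: tm_of_def)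
  finally show ?thesis by (simp add: tm_of_def)
qed

lemma tm_of_inv:
  assumes "\<And>x'. (\<Sum>x\<in>UNIV. abs_tm W $ x $ x') = 1"
  shows "tm_of y0 x0 (\<lambda>(y, x, x'). W y $ x $ x') = W"
proof -
  have "\<And>x'. W y0 $ x0 $ x' = 1 - (\<Sum>p\<in>UNIV - {(y0, x0)}. W (fst p) $ snd p $ x')"
  proof -
    fix x'
    have "1 = (\<Sum>x\<in>UNIV. \<Sum>y\<in>UNIV. (\<lambda>p. W (fst p) $ snd p $ x') (y, x))"
      using assms[of x'] by (simp add: abs_tm_entry)
    also have "\<dots> = W y0 $ x0 $ x' + (\<Sum>p\<in>UNIV - {(y0, x0)}. W (fst p) $ snd p $ x')"
      using colsum_pairs[of "\<lambda>p. W (fst p) $ snd p $ x'" y0 x0] by simp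
    finally show "W y0 $ x0 $ x' = 1 - (\<Sum>p\<in>UNIV - {(y0, x0)}. W (fst p) $ snd p $ x')" by simp
  qed
  then show ?thesis
    unfolding tm_of_def by (auto simp: fun_eq_iff vec_eq_iff case_prod_beta)
qed




lemma det_inj:
  fixes A :: "real^'n^'n"
  assumes "det A \<noteq> 0" "A *v v = A *v w" shows "v = w"
  using cramer[OF assms(1), of v "A *v w"] cramer[OF assms(1), of w "A *v w"] assms(2) by simp

lemma det_span_rows:
  fixes b :: "'n::finite \<Rightarrow> real^'n"
  assumes "det (\<chi> i. b i) \<noteq> 0"
  shows "span (range b) = UNIV"
proof -
  let ?A = "(\<chi> i. b i) :: real^'n^'n"
  have d: "det (transpose ?A) \<noteq> 0" using assms by (simp add: det_transpose)
  have "v \<in> span (range b)" for v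
  proof -
    obtain x where x: "transpose ?A *v x = v"
      using cramer[OF d] by blast
    have "v = (\<Sum>i\<in>UNIV. x $ i *s b i)"
      unfolding x[symmetric] matrix_mult_sum column_transpose by (simp add: row_def)
    also have "\<dots> \<in> span (range b)"
      by (intro span_sum) (auto simp: scalar_mult_eq_scaleR intro: span_scale span_base)
    finally show ?thesis .
  qed
  then show ?thesis by auto
qed

definition sumv :: "real^'x::finite \<Rightarrow> real" where "sumv v = (\<Sum>x\<in>UNIV. v $ x)"

lemma sumv_mv: "sumv (M *v w) = (\<Sum>x'\<in>UNIV. (\<Sum>x\<in>UNIV. M $ x $ x') * w $ x')"
  unfolding sumv_def matrix_vector_mult_def
  by (simp add: sum_distrib_right) (rule sum.swap)

definition colsum1 :: "('y::finite \<Rightarrow> real^'x::finite^'x) \<Rightarrow> bool" where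
  "colsum1 W \<longleftrightarrow> (\<forall>x'. (\<Sum>x\<in>UNIV. abs_tm W $ x $ x') = 1)"

lemma pad:
  assumes "colsum1 W"
  shows "(\<Sum>y\<in>UNIV. sumv (wprod W (y # ys) *v v)) = sumv (wprod W ys *v v)"
proof -
  let ?w = "wprod W ys *v v"
  have "(\<Sum>y\<in>UNIV. sumv (wprod W (y # ys) *v v)) = (\<Sum>y\<in>UNIV. sumv (W y *v ?w))"
    by (simp add: matrix_vector_mul_assoc)
  also have "\<dots> = (\<Sum>y\<in>UNIV. \<Sum>x'\<in>UNIV. (\<Sum>x\<in>UNIV. W y $ x $ x') * ?w $ x')"
    by (simp add: sumv_mv)
  also have "\<dots> = (\<Sum>x'\<in>UNIV. (\<Sum>x\<in>UNIV. abs_tm W $ x $ x') * ?w $ x')"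
  proof -
    have e: "\<And>x'. (\<Sum>x\<in>UNIV. abs_tm W $ x $ x') = (\<Sum>y\<in>UNIV. \<Sum>x\<in>UNIV. W y $ x $ x')"
      unfolding abs_tm_entry by (rule sum.swap)
    show ?thesis unfolding e sum_distrib_right by (rule sum.swap)
  qed
  also have "\<dots> = sumv ?w"
    using assms by (simp add: colsum1_def sumv_def)
  finally show ?thesis .
qed

lemma kerP_down:
  assumes "colsum1 W" "v \<in> kerP W k"
  shows "j \<le> k \<Longrightarrow> length ys = k - j \<Longrightarrow> sumv (wprod W ys *v v) = 0"
proof (induction j arbitrary: ys)
  case 0
  have "Pk W k v ys = 0" using assms(2) unfolding kerP_def by simp
  then show ?case using 0 by (simp add: Pk_def sumv_def)
next
  case (Suc j)
  have "\<And>y. sumv (wprod W (y # ys) *v v) = 0"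
    using Suc by (intro Suc.IH) auto
  then show ?case using pad[OF assms(1), of ys v] by simp
qed

lemma zero_kerP: "0 \<in> kerP W k"
  unfolding kerP_def Pk_def by (simp add: fun_eq_iff)

lemma KW_zero:
  fixes W :: "'y::finite \<Rightarrow> real^'x::finite^'x"
  assumes cs: "colsum1 W" and d: "det (\<chi> i x. \<Sum>z\<in>UNIV. wprod W (ws i) $ z $ x) \<noteq> 0"
    and len: "\<And>i. length (ws i) \<le> L" and L: "1 \<le> L"
  shows "KW W = {0}"
proof -
  let ?R = "(\<chi> i x. \<Sum>z\<in>UNIV. wprod W (ws i) $ z $ x) :: real^'x^'x"
  have kL: "kerP W L = {0}"
  proof
    show "kerP W L \<subseteq> {0}"
    proof
      fix v assume v: "v \<in> kerP W L"
      have "?R *v v = ?R *v 0"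
      proof (rule iffD2[OF vec_eq_iff], rule allI)
        fix i
        have "sumv (wprod W (ws i) *v v) = 0"
          by (rule kerP_down[OF cs v, of "L - length (ws i)"]) (use len[of i] in auto)
        then have "(\<Sum>x'\<in>UNIV. (\<Sum>x\<in>UNIV. wprod W (ws i) $ x $ x') * v $ x') = 0"
          by (simp only: sumv_mv)
        then show "(?R *v v) $ i = (?R *v 0) $ i"
          by (simp add: matrix_vector_mult_def)
      qed
      then show "v \<in> {0}" using det_inj[OF d] by blast
    qed
  qed (simp add: zero_kerP)
  have I: "(\<Inter>k\<in>{1..}. kerP W k) = kerP W L"
    using kL L zero_kerP by auto
  have "1 \<le> kW W \<and> (\<Inter>k\<in>{1..}. kerP W k) = kerP W (kW W)"
    unfolding kW_def by (rule LeastI[of _ L]) (use I L in auto)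
  then show ?thesis unfolding KW_def using I kL by simp
qed

lemma Vk_full:
  fixes W :: "'y::finite \<Rightarrow> real^'x::finite^'x"
  assumes d: "det (\<chi> i. wprod W (ws i) *v P) \<noteq> 0"
    and len: "\<And>i. length (ws i) \<le> L" and L: "1 \<le> L"
  shows "Vk W P (kPW P W) = UNIV"
proof -
  have "span (range (\<lambda>i. wprod W (ws i) *v P)) = UNIV"
    using det_span_rows[OF d] .
  moreover have "span (range (\<lambda>i. wprod W (ws i) *v P)) \<subseteq> Vk W P L"
    unfolding Vk_def by (rule span_mono) (use len in auto)
  ultimately have VL: "Vk W P L = UNIV" by auto
  have I: "(\<Union>k\<in>{1..}. Vk W P k) = Vk W P L"
    using VL L by auto
  have "1 \<le> kPW P W \<and> (\<Union>k\<in>{1..}. Vk W P k) = Vk W P (kPW P W)"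
    unfolding kPW_def by (rule LeastI[of _ L]) (use I L in auto)
  then show ?thesis using I VL by simp
qed




definition evec :: "'x::finite \<Rightarrow> real^'x" where "evec x0 = (\<chi> i. if i = x0 then 1 else 0)"

definition Nmat :: "'x::finite \<Rightarrow> ('y::finite \<Rightarrow> real^'x^'x) \<Rightarrow> real^'x^'x" where
  "Nmat x0 W = (\<chi> i j. if i = x0 then 1 else (if i = j then 1 else 0) - abs_tm W $ i $ j)"

definition qvec :: "'x::finite \<Rightarrow> ('y::finite \<Rightarrow> real^'x^'x) \<Rightarrow> real^'x" where
  "qvec x0 W = (\<chi> k. det (\<chi> i j. if j = k then evec x0 $ i else Nmat x0 W $ i $ j))"

lemma abs_tm_nonneg: "transition_matrix W \<Longrightarrow> 0 \<le> abs_tm W $ i $ j"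
  unfolding transition_matrix_def abs_tm_entry by (auto intro: sum_nonneg)

lemma stat_N:
  assumes "prob_vec P" "abs_tm W *v P = P"
  shows "Nmat x0 W *v P = evec x0"
proof (rule iffD2[OF vec_eq_iff], rule allI)
  fix i
  show "(Nmat x0 W *v P) $ i = evec x0 $ i"
  proof (cases "i = x0")
    case True
    then show ?thesis using assms(1) by (simp add: Nmat_def evec_def matrix_vector_mult_def prob_vec_def)
  next
    case False
    have "(abs_tm W *v P) $ i = P $ i" using assms(2) by simp
    then have "(\<Sum>j\<in>UNIV. abs_tm W $ i $ j * P $ j) = P $ i" by (simp add: matrix_vector_mult_def)
    moreover have "(\<Sum>j\<in>UNIV. ((if i = j then 1 else 0) - abs_tm W $ i $ j) * P $ j)
        = P $ i - (\<Sum>j\<in>UNIV. abs_tm W $ i $ j * P $ j)"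
    proof -
      have "(\<Sum>j\<in>UNIV. ((if i = j then 1 else 0) - abs_tm W $ i $ j) * P $ j)
          = (\<Sum>j\<in>UNIV. (if i = j then P $ j else 0) - abs_tm W $ i $ j * P $ j)"
        by (rule sum.cong) (auto simp: left_diff_distrib)
      also have "\<dots> = P $ i - (\<Sum>j\<in>UNIV. abs_tm W $ i $ j * P $ j)"
        by (simp add: sum_subtractf)
      finally show ?thesis .
    qed
    ultimately show ?thesis using False by (simp add: Nmat_def evec_def matrix_vector_mult_def)
  qed
qed

lemma simplex_compact: "compact {P::real^'x::finite. prob_vec P}"
  unfolding compact_eq_bounded_closed
proof (intro conjI)
  show "bounded {P::real^'x::finite. prob_vec P}"
    unfolding bounded_iff
  proof (intro exI ballI)
    fix P :: "real^'x" assume "P \<in> {P. prob_vec P}"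
    then have "(\<Sum>i\<in>UNIV. \<bar>P $ i\<bar>) = 1" by (simp add: prob_vec_def)
    then show "norm P \<le> 1" using norm_le_l1_cart[of P] by simp
  qed
  have "{P::real^'x::finite. prob_vec P} = (\<Inter>x. {P. 0 \<le> P $ x}) \<inter> {P. (\<Sum>x\<in>UNIV. P $ x) = 1}"
    by (auto simp: prob_vec_def)
  also have "closed \<dots>"
    by (intro closed_Int closed_INT ballI closed_Collect_le closed_Collect_eq continuous_intros)
  finally show "closed {P::real^'x::finite. prob_vec P}" .
qed

lemma simplex_convex: "convex {P::real^'x::finite. prob_vec P}"
  unfolding convex_def prob_vec_def
  by (auto simp: sum.distrib sum_distrib_left[symmetric])

lemma stat_exists:
  fixes W :: "'y::finite \<Rightarrow> real^'x::finite^'x"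
  assumes "transition_matrix W"
  shows "\<exists>P. prob_vec P \<and> abs_tm W *v P = P"
proof -
  have ne: "{P::real^'x. prob_vec P} \<noteq> {}"
  proof -
    have "prob_vec (evec x0 :: real^'x)" for x0 by (simp add: prob_vec_def evec_def)
    then show ?thesis by blast
  qed
  have cont: "continuous_on {P. prob_vec P} ((*v) (abs_tm W))"
    by (intro linear_continuous_on matrix_vector_mul_bounded_linear)
  have maps: "(*v) (abs_tm W) \<in> {P. prob_vec P} \<rightarrow> {P. prob_vec P}"
  proof
    fix P :: "real^'x" assume P: "P \<in> {P. prob_vec P}"
    have "0 \<le> (abs_tm W *v P) $ i" for i
      using P abs_tm_nonneg[OF assms] by (auto simp: prob_vec_def matrix_vector_mult_def intro!: sum_nonneg)
    moreover have "sumv (abs_tm W *v P) = 1"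
      using P assms by (simp add: sumv_mv transition_matrix_def prob_vec_def)
    ultimately show "abs_tm W *v P \<in> {P. prob_vec P}" by (simp add: prob_vec_def sumv_def)
  qed
  obtain P where "P \<in> {P. prob_vec P}" "abs_tm W *v P = P"
    using brouwer[OF simplex_compact simplex_convex ne cont maps] by blast
  then show ?thesis by blast
qed

lemma stationary_eq:
  assumes tm: "transition_matrix W" and d: "det (Nmat x0 W) \<noteq> 0"
  shows "stationary W = (\<chi> k. qvec x0 W $ k / det (Nmat x0 W))"
proof -
  let ?P0 = "(\<chi> k. qvec x0 W $ k / det (Nmat x0 W))"
  have uniq: "P = ?P0" if "prob_vec P" "abs_tm W *v P = P" for P
    using cramer[OF d, of P "evec x0"] stat_N[OF that] unfolding qvec_def by simp
  obtain P where P: "prob_vec P" "abs_tm W *v P = P" using stat_exists[OF tm] by blast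
  show ?thesis
    unfolding stationary_def
    by (rule the_equality) (use P uniq in auto)
qed

lemma irred:
  assumes "transition_matrix W" "\<And>i j. abs_tm W $ i $ j \<noteq> 0"
  shows "irreducible_tm W"
  unfolding irreducible_tm_def irreducible_mat_def
proof (intro allI exI)
  fix i j
  show "0 < mpow (abs_tm W) 1 $ i $ j"
    using abs_tm_nonneg[OF assms(1), of i j] assms(2)[of i j]
    by (simp add: mpow_def order_less_le)
qed




definition pmat :: "('s \<Rightarrow> real) set \<Rightarrow> ('s \<Rightarrow> real^'n^'m) \<Rightarrow> bool" where
  "pmat V A \<longleftrightarrow> (\<forall>i j. (\<lambda>s. A s $ i $ j) \<in> polyfun V)"

definition pvec :: "('s \<Rightarrow> real) set \<Rightarrow> ('s \<Rightarrow> real^'n) \<Rightarrow> bool" where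
  "pvec V v \<longleftrightarrow> (\<forall>i. (\<lambda>s. v s $ i) \<in> polyfun V)"

lemma polyfun_proj: "j \<in> I \<Longrightarrow> (\<lambda>\<theta>. \<theta> j) \<in> polyfun ((\<lambda>j \<theta>. \<theta> j) ` I)"
  by (rule pvar) auto

lemma polyfun_uminus: "f \<in> polyfun V \<Longrightarrow> (\<lambda>x. - f x) \<in> polyfun V"
  using polyfun_diff[OF pconst[of 0], of f] by simp

lemma polyfun_const': "(\<lambda>_. c) \<in> polyfun V" by (rule pconst)

lemma pmat_mult: "pmat V A \<Longrightarrow> pmat V B \<Longrightarrow> pmat V (\<lambda>s. A s ** B s :: real^'n::finite^'m)"
  unfolding pmat_def matrix_matrix_mult_def by (auto intro!: polyfun_sum pmult)

lemma pmat_mv: "pmat V A \<Longrightarrow> pvec V v \<Longrightarrow> pvec V (\<lambda>s. A s *v v s :: real^'m)"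
  for A :: "'s \<Rightarrow> real^'n::finite^'m"
  unfolding pmat_def pvec_def matrix_vector_mult_def by (auto intro!: polyfun_sum pmult)

lemma pmat_const: "pmat V (\<lambda>_. M)"
  unfolding pmat_def by (auto intro: pconst)

lemma pvec_const: "pvec V (\<lambda>_. M)"
  unfolding pvec_def by (auto intro: pconst)

lemma pmat_wprod: "(\<And>y. pmat V (\<lambda>s. W s y)) \<Longrightarrow> pmat V (\<lambda>s. wprod (W s) ys :: real^'x::finite^'x)"
  by (induction ys) (auto simp: pmat_const intro: pmat_mult)

lemma pmat_abs_tm: "(\<And>y. pmat V (\<lambda>s. W s y)) \<Longrightarrow> pmat V (\<lambda>s. abs_tm (W s) :: real^'x::finite^'x)"
  for W :: "'s \<Rightarrow> 'y::finite \<Rightarrow> _"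
  unfolding pmat_def abs_tm_entry by (auto intro!: polyfun_sum)

lemma polyfun_det: "pmat V A \<Longrightarrow> (\<lambda>s. det (A s :: real^'n::finite^'n)) \<in> polyfun V"
  unfolding det_def pmat_def
  by (auto intro!: polyfun_sum polyfun_prod pmult pconst simp: finite_permutations)

lemma pmat_Nmat: "(\<And>y. pmat V (\<lambda>s. W s y)) \<Longrightarrow> pmat V (\<lambda>s. Nmat x0 (W s) :: real^'x::finite^'x)"
  for W :: "'s \<Rightarrow> 'y::finite \<Rightarrow> _"
  using pmat_abs_tm[of V W] unfolding pmat_def Nmat_def
  apply (intro allI)
  subgoal for i j by (cases "i = x0"; cases "i = j") (auto intro!: polyfun_diff pconst polyfun_uminus)
  done

lemma pvec_qvec: "(\<And>y. pmat V (\<lambda>s. W s y)) \<Longrightarrow> pvec V (\<lambda>s. qvec x0 (W s) :: real^'x::finite)"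
  for W :: "'s \<Rightarrow> 'y::finite \<Rightarrow> _"
  unfolding pvec_def qvec_def
proof
  fix k
  assume "\<And>y. pmat V (\<lambda>s. W s y)"
  then have N: "pmat V (\<lambda>s. Nmat x0 (W s) :: real^'x::finite^'x)" by (rule pmat_Nmat)
  show "(\<lambda>s. (\<chi> k. det (\<chi> i j. if j = k then evec x0 $ i else Nmat x0 (W s) $ i $ j)) $ k) \<in> polyfun V"
    apply simp
    apply (rule polyfun_det)
    using N unfolding pmat_def
    apply (intro allI)
    subgoal for i j by (cases "j = k") (auto intro: pconst)
    done
qed

lemma pmat_tm_of: "pmat ((\<lambda>j \<theta>. \<theta> j) ` tm_coords y0 x0) (\<lambda>\<theta>. tm_of y0 x0 \<theta> y)"
  unfolding pmat_def tm_of_def tm_coords_def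
  apply (intro allI)
  subgoal for i j by (cases "(y, i) = (y0, x0)") (auto intro!: polyfun_diff polyfun_sum pconst polyfun_proj)
  done

lemma det_scale_rows: "det (\<chi> i. r *s b i :: real^'n::finite^'n) = r ^ CARD('n) * det (\<chi> i. b i)"
  unfolding det_def
  by (simp add: sum_distrib_left prod.distrib algebra_simps)




lemma vander:
  fixes lam :: "'x::finite \<Rightarrow> real"
  assumes inj: "inj lam" and z: "\<And>k. k < CARD('x) \<Longrightarrow> (\<Sum>x\<in>UNIV. c x * lam x ^ k) = 0"
  shows "c x1 = 0"
proof -
  let ?p = "\<Prod>z\<in>UNIV - {x1}. [:- lam z, 1:]"
  have "degree ?p \<le> sum (degree \<circ> (\<lambda>z. [:- lam z, 1:])) (UNIV - {x1})"
    by (rule degree_prod_sum_le) simp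
  also have "\<dots> = CARD('x) - 1" by (simp add: card_Diff_singleton)
  finally have d1: "degree ?p \<le> CARD('x) - 1" .
  have "0 < CARD('x)" by simp
  with d1 have deg: "degree ?p < CARD('x)" by arith
  have "(\<Sum>x\<in>UNIV. c x * poly ?p (lam x)) = (\<Sum>x\<in>UNIV. \<Sum>i\<le>degree ?p. c x * (coeff ?p i * lam x ^ i))"
    by (simp add: poly_altdef sum_distrib_left)
  also have "\<dots> = (\<Sum>i\<le>degree ?p. \<Sum>x\<in>UNIV. coeff ?p i * (c x * lam x ^ i))"
    by (subst sum.swap) (simp add: mult.left_commute)
  also have "\<dots> = (\<Sum>i\<le>degree ?p. coeff ?p i * (\<Sum>x\<in>UNIV. c x * lam x ^ i))"
    by (simp add: sum_distrib_left)
  also have "\<dots> = 0" using z deg by (auto intro!: sum.neutral)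
  finally have s0: "(\<Sum>x\<in>UNIV. c x * poly ?p (lam x)) = 0" .
  have pz: "poly ?p (lam x) = 0" if "x \<noteq> x1" for x
    using that by (auto simp: poly_prod)
  have pnz: "poly ?p (lam x1) \<noteq> 0"
    using inj by (auto simp: poly_prod inj_def)
  have "(\<Sum>x\<in>UNIV. c x * poly ?p (lam x)) = c x1 * poly ?p (lam x1)"
    by (subst sum.remove[of _ x1]) (auto simp: pz intro!: sum.neutral)
  with s0 pnz show ?thesis by simp
qed

lemma det_nz_from:
  fixes A :: "real^'n::finite^'n"
  assumes "\<And>c. A *v c = 0 \<Longrightarrow> c = 0"
  shows "det A \<noteq> 0"
proof -
  have "inj ((*v) A)"
  proof (rule injI)
    fix v w assume "A *v v = A *v w"
    then have "A *v (v - w) = 0" by (simp add: matrix_vector_mult_diff_distrib)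
    then show "v = w" using assms[of "v - w"] by simp
  qed
  then show ?thesis using det_nz_iff_inj[of "(*v) A"] by simp
qed

lemma vander_det:
  fixes lam :: "'x::finite \<Rightarrow> real"
  assumes inj: "inj lam" and e: "bij_betw e (UNIV::'x set) {0..<CARD('x)}"
  shows "det (\<chi> i x. lam x ^ e i) \<noteq> 0"
proof (rule det_nz_from)
  fix c :: "real^'x" assume c: "(\<chi> i x. lam x ^ e i) *v c = 0"
  have "\<And>k. k < CARD('x) \<Longrightarrow> (\<Sum>x\<in>UNIV. c $ x * lam x ^ k) = 0"
  proof -
    fix k assume "k < CARD('x)"
    then have "k \<in> e ` UNIV" using e by (simp add: bij_betw_def)
    then obtain i where "e i = k" by blast
    then show "(\<Sum>x\<in>UNIV. c $ x * lam x ^ k) = 0"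
      using c by (auto simp: vec_eq_iff matrix_vector_mult_def mult.commute)
  qed
  then show "c = 0" using vander[OF inj] by (auto simp: vec_eq_iff)
qed

lemma vander_det1:
  fixes lam :: "'x::finite \<Rightarrow> real"
  assumes inj: "inj lam" and e: "bij_betw e (UNIV::'x set) {0..<CARD('x)}" and nz: "\<And>x. lam x \<noteq> 0"
  shows "det (\<chi> i x. lam x ^ (e i + 1)) \<noteq> 0"
proof (rule det_nz_from)
  fix c :: "real^'x" assume c: "(\<chi> i x. lam x ^ (e i + 1)) *v c = 0"
  have "\<And>k. k < CARD('x) \<Longrightarrow> (\<Sum>x\<in>UNIV. (c $ x * lam x) * lam x ^ k) = 0"
  proof -
    fix k assume "k < CARD('x)"
    then have "k \<in> e ` UNIV" using e by (simp add: bij_betw_def)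
    then obtain i where "e i = k" by blast
    then show "(\<Sum>x\<in>UNIV. (c $ x * lam x) * lam x ^ k) = 0"
      using c by (auto simp: vec_eq_iff matrix_vector_mult_def algebra_simps)
  qed
  then have "\<And>x. c $ x * lam x = 0" using vander[OF inj, of "\<lambda>x. c $ x * lam x"] by blast
  then show "c = 0" using nz by (auto simp: vec_eq_iff)
qed




definition diagm :: "('x::finite \<Rightarrow> real) \<Rightarrow> real^'x^'x" where
  "diagm a = (\<chi> i j. if i = j then a i else 0)"

definition Wst :: "'y \<Rightarrow> 'y \<Rightarrow> ('x::finite \<Rightarrow> real) \<Rightarrow> 'y \<Rightarrow> real^'x^'x" where
  "Wst y0 y1 lam = (\<lambda>y. if y = y1 then diagm lam else if y = y0 then (\<chi> i j. 1 / real CARD('x)) - diagm lam else 0)"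

lemma diagm_mult: "diagm a ** diagm b = diagm (\<lambda>x. a x * b x)"
  unfolding diagm_def matrix_matrix_mult_def
  by (auto simp: vec_eq_iff if_distrib[of "\<lambda>x. x * _"] sum.delta cong: if_cong)

lemma diagm_one: "diagm (\<lambda>_. 1) = mat 1"
  unfolding diagm_def mat_def by (simp add: vec_eq_iff)

lemma abs_tm_Wst:
  fixes lam :: "'x::finite \<Rightarrow> real" and y0 y1 :: "'y::finite"
  assumes "y1 \<noteq> y0"
  shows "abs_tm (Wst y0 y1 lam) = (\<chi> i j. 1 / real CARD('x))"
proof -
  have "Wst y0 y1 lam = (\<lambda>y. (if y = y1 then diagm lam else 0) + (if y = y0 then (\<chi> i j. 1 / real CARD('x)) - diagm lam else 0))"
    using assms by (auto simp: Wst_def fun_eq_iff)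
  then show ?thesis unfolding abs_tm_def by (simp add: sum.distrib)
qed

lemma colsum_Wst:
  fixes lam :: "'x::finite \<Rightarrow> real" and y0 y1 :: "'y::finite"
  assumes "y1 \<noteq> y0"
  shows "colsum1 (Wst y0 y1 lam)"
  unfolding colsum1_def abs_tm_Wst[OF assms] by simp

lemma wprod_Wst: "wprod (Wst y0 y1 lam) (replicate k y1) = diagm (\<lambda>x. lam x ^ k)"
  by (induction k) (auto simp: Wst_def diagm_mult diagm_one mult.commute)

lemma tm_of_Wst:
  fixes lam :: "'x::finite \<Rightarrow> real" and y0 y1 :: "'y::finite"
  assumes "y1 \<noteq> y0"
  shows "tm_of y0 x0 (\<lambda>(y, x, x'). Wst y0 y1 lam y $ x $ x') = Wst y0 y1 lam"
  by (rule tm_of_inv) (use colsum_Wst[OF assms, of lam] in \<open>unfold colsum1_def, blast\<close>)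

lemma colsum_diagm: "(\<chi> i x. \<Sum>z\<in>UNIV. diagm (a i) $ z $ x) = (\<chi> i x. a i x)"
  unfolding diagm_def by (simp add: vec_eq_iff)

lemma diagm_mv: "diagm a *v (\<chi> _. c) = c *s (\<chi> x. a x)"
proof -
  have "\<And>i. (\<Sum>j\<in>UNIV. (if i = j then a i else 0) * c) = c * a i"
  proof -
    fix i
    have "(\<Sum>j\<in>UNIV. (if i = j then a i else 0) * c) = (\<Sum>j\<in>UNIV. (if i = j then a i * c else 0))"
      by (rule sum.cong) auto
    then show "(\<Sum>j\<in>UNIV. (if i = j then a i else 0) * c) = c * a i" by simp
  qed
  then show ?thesis unfolding diagm_def matrix_vector_mult_def by (simp add: vec_eq_iff)
qed

lemma dist_of_unif:
  fixes x0 :: "'x::finite"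
  shows "dist_of x0 (\<lambda>_. 1 / real CARD('x)) = (\<chi> _. 1 / real CARD('x))"
proof -
  have c: "card (UNIV - {x0}) = CARD('x) - 1" by (simp add: card_Diff_singleton)
  have pos: "0 < CARD('x)" by simp
  then have "1 - real (CARD('x) - 1) / real CARD('x) = 1 / real CARD('x)"
    by (simp add: of_nat_diff field_simps)
  then show ?thesis unfolding dist_of_def using c by (simp add: vec_eq_iff)
qed

lemma Nmat_Wst_det:
  fixes lam :: "'x::finite \<Rightarrow> real" and y0 y1 :: "'y::finite"
  assumes "y1 \<noteq> y0"
  shows "det (Nmat x0 (Wst y0 y1 lam)) \<noteq> 0"
proof (rule det_nz_from)
  fix c :: "real^'x" assume c: "Nmat x0 (Wst y0 y1 lam) *v c = 0"
  let ?d = "real CARD('x)"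
  have row: "(Nmat x0 (Wst y0 y1 lam) *v c) $ i = (if i = x0 then sum (($) c) UNIV else c $ i - sum (($) c) UNIV / ?d)" for i
  proof (cases "i = x0")
    case False
    have "(\<Sum>j\<in>UNIV. ((if i = j then 1 else 0) - 1 / ?d) * c $ j) = (\<Sum>j\<in>UNIV. (if i = j then c $ j else 0) - c $ j / ?d)"
      by (rule sum.cong) (auto simp: left_diff_distrib)
    also have "\<dots> = c $ i - sum (($) c) UNIV / ?d"
      by (simp add: sum_subtractf sum_divide_distrib)
    finally show ?thesis using False
      by (simp add: Nmat_def abs_tm_Wst[OF assms] matrix_vector_mult_def)
  qed (simp add: Nmat_def matrix_vector_mult_def)
  have s0: "sum (($) c) UNIV = 0" using row[of x0] c by simp
  then have "\<And>i. i \<noteq> x0 \<Longrightarrow> c $ i = 0" using row c by (metis diff_zero div_0 zero_index)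
  moreover have "c $ x0 = 0"
  proof -
    have "sum (($) c) UNIV = c $ x0 + sum (($) c) (UNIV - {x0})" by (simp add: sum.remove)
    also have "sum (($) c) (UNIV - {x0}) = 0" using \<open>\<And>i. i \<noteq> x0 \<Longrightarrow> c $ i = 0\<close> by (auto intro: sum.neutral)
    finally show ?thesis using s0 by simp
  qed
  ultimately show "c = 0" by (metis vec_eq_iff zero_index)
qed

lemma qvec_Wst:
  fixes lam :: "'x::finite \<Rightarrow> real" and y0 y1 :: "'y::finite"
  assumes "y1 \<noteq> y0"
  shows "qvec x0 (Wst y0 y1 lam) = (\<chi> _. det (Nmat x0 (Wst y0 y1 lam)) / real CARD('x))"
proof -
  let ?N = "Nmat x0 (Wst y0 y1 lam)"
  let ?d = "real CARD('x)"
  have pos: "0 < ?d" by simp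
  have "?N *v (\<chi> _. 1 / ?d) = evec x0"
  proof (rule iffD2[OF vec_eq_iff], rule allI)
    fix i
    show "(?N *v (\<chi> _. 1 / ?d)) $ i = evec x0 $ i"
    proof (cases "i = x0")
      case True
      then show ?thesis using pos by (simp add: Nmat_def evec_def matrix_vector_mult_def)
    next
      case False
      have "(\<Sum>j\<in>UNIV. ((if i = j then 1 else 0) - 1 / ?d) / ?d) = (\<Sum>j\<in>UNIV. (if i = j then 1 / ?d else 0) - 1 / (?d * ?d))"
        by (rule sum.cong) (auto simp: diff_divide_distrib)
      also have "\<dots> = 0" using pos by (simp add: sum_subtractf)
      finally have "(\<Sum>j\<in>UNIV. ((if i = j then 1 else 0) - 1 / ?d) / ?d) = 0" .
      then show ?thesis using False
        by (simp add: Nmat_def evec_def abs_tm_Wst[OF assms] matrix_vector_mult_def del: sum_subtractf)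
    qed
  qed
  then have "(\<chi> _. 1 / ?d) = (\<chi> k. qvec x0 (Wst y0 y1 lam) $ k / det ?N)"
    using cramer[OF Nmat_Wst_det[OF assms], where x="\<chi> _. 1 / ?d" and b="evec x0"] unfolding qvec_def by simp
  then show ?thesis using Nmat_Wst_det[OF assms, of x0]
    by (auto simp: vec_eq_iff field_simps)
qed




theorem lemma5:
  fixes y0 :: "'y::finite" and x0 :: "'x::finite"
  assumes "CARD('y) \<ge> 2"
  shows "(AE z in (PiM (tm_coords y0 x0) (\<lambda>_. lborel)) \<Otimes>\<^sub>M (PiM (UNIV - {x0}) (\<lambda>_. lborel)).
            transition_matrix (tm_of y0 x0 (fst z)) \<and> prob_vec (dist_of x0 (snd z)) \<longrightarrow>
              KW (tm_of y0 x0 (fst z)) = {0} \<and>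
              Vk (tm_of y0 x0 (fst z)) (dist_of x0 (snd z))
                 (kPW (dist_of x0 (snd z)) (tm_of y0 x0 (fst z))) = UNIV)
       \<and> (AE \<theta> in PiM (tm_coords y0 x0) (\<lambda>_. lborel).
            transition_matrix (tm_of y0 x0 \<theta>) \<longrightarrow>
              irreducible_tm (tm_of y0 x0 \<theta>) \<and>
              KW (tm_of y0 x0 \<theta>) = {0} \<and>
              Vk (tm_of y0 x0 \<theta>) (stationary (tm_of y0 x0 \<theta>))
                 (kPW (stationary (tm_of y0 x0 \<theta>)) (tm_of y0 x0 \<theta>)) = UNIV)"
proof -
  obtain y1 :: 'y where y1: "y1 \<noteq> y0"
  proof -
    have "\<exists>y1::'y. y1 \<noteq> y0"
    proof (rule ccontr)
      assume "\<not> (\<exists>y1::'y. y1 \<noteq> y0)"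
      then have "(UNIV::'y set) = {y0}" by auto
      then have "CARD('y) = 1" by (metis card.empty card_insert_disjoint empty_iff finite.emptyI One_nat_def)
      then show False using assms by simp
    qed
    then show ?thesis using that by blast
  qed
  obtain e :: "'x \<Rightarrow> nat" where e: "bij_betw e (UNIV::'x set) {0..<CARD('x)}"
    using ex_bij_betw_finite_nat[of "UNIV::'x set"] by auto
  define lam where "lam x = real (e x) + 1" for x
  have inj_lam: "inj lam"
    using e unfolding lam_def inj_def bij_betw_def by auto
  have lam_nz: "\<And>x. lam x \<noteq> 0" unfolding lam_def by simp
  define Ws where "Ws = Wst y0 y1 lam"
  define \<theta>s where "\<theta>s = (\<lambda>(y, x, x'). Ws y $ x $ x')"
  have T\<theta>s: "tm_of y0 x0 \<theta>s = Ws"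
    unfolding \<theta>s_def Ws_def by (rule tm_of_Wst[OF y1])
  define ws where "ws i = replicate (e i + 1) y1" for i :: 'x
  define vs where "vs i = replicate (e i) y1" for i :: 'x
  define L where "L = CARD('x)"
  have L1: "1 \<le> L" unfolding L_def by simp
  have e_lt: "e i < CARD('x)" for i using e by (auto simp: bij_betw_def)
  have lenws: "\<And>i. length (ws i) \<le> L" unfolding ws_def L_def using e_lt by (simp add: Suc_leI)
  have lenvs: "\<And>i. length (vs i) \<le> L" unfolding vs_def L_def using e_lt by (simp add: less_imp_le)
  let ?T = "tm_of y0 x0"
  define g1 where "g1 \<theta> = det (\<chi> i x. \<Sum>z\<in>UNIV. wprod (?T \<theta>) (ws i) $ z $ x)" for \<theta>
  define g2 where "g2 \<theta> = det (Nmat x0 (?T \<theta>))" for \<theta>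
  define g3 where "g3 \<theta> = det (\<chi> i. wprod (?T \<theta>) (vs i) *v qvec x0 (?T \<theta>))" for \<theta>
  define g4 where "g4 \<theta> = (\<Prod>i\<in>UNIV. \<Prod>j\<in>UNIV. abs_tm (?T \<theta>) $ i $ j)" for \<theta>
  define hp where "hp z = g1 (fst z) * det (\<chi> i. wprod (?T (fst z)) (vs i) *v dist_of x0 (snd z))" for z
  let ?V = "(\<lambda>j \<theta>. \<theta> j) ` tm_coords y0 x0"
  have pT: "\<And>y. pmat ?V (\<lambda>\<theta>. ?T \<theta> y)" by (rule pmat_tm_of)
  have pg1: "g1 \<in> polyfun ?V"
    unfolding g1_def[abs_def]
    by (rule polyfun_det) (use pmat_wprod[where W="tm_of y0 x0", OF pT] in \<open>auto simp: pmat_def intro!: polyfun_sum\<close>)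
  have pg2: "g2 \<in> polyfun ?V"
    unfolding g2_def[abs_def] by (rule polyfun_det, rule pmat_Nmat[where W="tm_of y0 x0"], rule pT)
  have pg3: "g3 \<in> polyfun ?V"
    unfolding g3_def[abs_def]
    apply (rule polyfun_det)
    using pmat_mv[OF pmat_wprod[where W="tm_of y0 x0", OF pT] pvec_qvec[where W="tm_of y0 x0", OF pT]] unfolding pmat_def pvec_def by simp
  have pg4: "g4 \<in> polyfun ?V"
    unfolding g4_def[abs_def] using pmat_abs_tm[where W="tm_of y0 x0", OF pT]
    unfolding pmat_def by (auto intro!: polyfun_prod)
  have Ws_abs: "abs_tm Ws = (\<chi> i j. 1 / real CARD('x))" unfolding Ws_def by (rule abs_tm_Wst[OF y1])
  have g1s: "g1 \<theta>s \<noteq> 0"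
    unfolding g1_def T\<theta>s Ws_def ws_def wprod_Wst colsum_diagm
    using vander_det1[OF inj_lam e lam_nz] by simp
  have g2s: "g2 \<theta>s \<noteq> 0"
    unfolding g2_def T\<theta>s Ws_def using Nmat_Wst_det[OF y1] .
  have g3s: "g3 \<theta>s \<noteq> 0"
  proof -
    let ?c = "det (Nmat x0 (Wst y0 y1 lam)) / real CARD('x)"
    have c: "?c \<noteq> 0" using Nmat_Wst_det[OF y1, of x0 lam] by simp
    have "g3 \<theta>s = det (\<chi> i. ?c *s (\<chi> x. lam x ^ e i))"
      unfolding g3_def T\<theta>s Ws_def vs_def wprod_Wst qvec_Wst[OF y1] diagm_mv ..
    also have "\<dots> = ?c ^ CARD('x) * det (\<chi> i x. lam x ^ e i)"
      by (rule det_scale_rows)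
    finally show ?thesis using c vander_det[OF inj_lam e] by simp
  qed
  have g4s: "g4 \<theta>s \<noteq> 0"
    unfolding g4_def T\<theta>s Ws_abs by simp
  define gall where "gall \<theta> = g1 \<theta> * g2 \<theta> * g3 \<theta> * g4 \<theta>" for \<theta>
  have pgall: "gall \<in> polyfun ?V"
    unfolding gall_def[abs_def] by (intro pmult pg1 pg2 pg3 pg4)
  have AE2: "AE \<theta> in PiM (tm_coords y0 x0) (\<lambda>_. lborel::real measure). gall \<theta> \<noteq> 0"
    by (rule polyfun_AE[OF _ pgall, of \<theta>s]) (use g1s g2s g3s g4s in \<open>auto simp: gall_def\<close>)
  have part2: "AE \<theta> in PiM (tm_coords y0 x0) (\<lambda>_. lborel).
            transition_matrix (?T \<theta>) \<longrightarrow>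
              irreducible_tm (?T \<theta>) \<and>
              KW (?T \<theta>) = {0} \<and>
              Vk (?T \<theta>) (stationary (?T \<theta>))
                 (kPW (stationary (?T \<theta>)) (?T \<theta>)) = UNIV"
    using AE2
  proof eventually_elim
    case (elim \<theta>)
    then have n1: "g1 \<theta> \<noteq> 0" and n2: "g2 \<theta> \<noteq> 0" and n3: "g3 \<theta> \<noteq> 0" and n4: "g4 \<theta> \<noteq> 0"
      by (auto simp: gall_def)
    have cs: "colsum1 (?T \<theta>)" unfolding colsum1_def using colsum_tm_of by blast
    show ?case
    proof (intro impI conjI)
      assume tm: "transition_matrix (?T \<theta>)"
      show "irreducible_tm (?T \<theta>)"
        by (rule irred[OF tm]) (use n4 in \<open>simp add: g4_def\<close>)
      show "KW (?T \<theta>) = {0}"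
        by (rule KW_zero[OF cs _ lenws L1]) (use n1 in \<open>simp add: g1_def\<close>)
      let ?c = "g2 \<theta>"
      have st: "stationary (?T \<theta>) = (1 / ?c) *s qvec x0 (?T \<theta>)"
        using stationary_eq[OF tm n2[unfolded g2_def]] unfolding g2_def
        by (simp add: vec_eq_iff)
      have "det (\<chi> i. wprod (?T \<theta>) (vs i) *v stationary (?T \<theta>))
          = det (\<chi> i. (1 / ?c) *s (wprod (?T \<theta>) (vs i) *v qvec x0 (?T \<theta>)))"
        unfolding st vector_scalar_commute ..
      also have "\<dots> = (1 / ?c) ^ CARD('x) * g3 \<theta>"
        unfolding g3_def by (rule det_scale_rows)
      finally have "det (\<chi> i. wprod (?T \<theta>) (vs i) *v stationary (?T \<theta>)) \<noteq> 0"
        using n2 n3 by simp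
      then show "Vk (?T \<theta>) (stationary (?T \<theta>)) (kPW (stationary (?T \<theta>)) (?T \<theta>)) = UNIV"
        by (rule Vk_full[OF _ lenvs L1])
    qed
  qed
  let ?Vp = "(\<lambda>j z. fst z j) ` tm_coords y0 x0 \<union> (\<lambda>j z. snd z j) ` (UNIV - {x0})"
  have compfst: "\<And>v. v \<in> ?V \<Longrightarrow> (\<lambda>z. v (fst z)) \<in> polyfun ?Vp"
    by (auto intro: pvar)
  have pTp: "\<And>y. pmat ?Vp (\<lambda>z. ?T (fst z :: 'y \<times> 'x \<times> 'x \<Rightarrow> real) y)"
    unfolding pmat_def
  proof (intro allI)
    fix y i j
    show "(\<lambda>z::('y \<times> 'x \<times> 'x \<Rightarrow> real) \<times> ('x \<Rightarrow> real). ?T (fst z) y $ i $ j) \<in> polyfun ?Vp"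
      using polyfun_comp[where g=fst, OF pT[unfolded pmat_def, rule_format, of y i j] compfst] by simp
  qed
  have pdist: "pvec ?Vp (\<lambda>z::('y \<times> 'x \<times> 'x \<Rightarrow> real) \<times> ('x \<Rightarrow> real). dist_of x0 (snd z))"
    unfolding pvec_def dist_of_def
  proof
    fix x
    show "(\<lambda>z::('y \<times> 'x \<times> 'x \<Rightarrow> real) \<times> ('x \<Rightarrow> real). (\<chi> x. if x = x0 then 1 - (\<Sum>z'\<in>UNIV - {x0}. snd z z') else snd z x) $ x) \<in> polyfun ?Vp"
      by (cases "x = x0") (auto intro!: polyfun_diff polyfun_sum pconst intro: pvar)
  qed
  have php: "hp \<in> polyfun ?Vp"
    unfolding hp_def[abs_def]
    apply (rule pmult)
     apply (rule polyfun_comp[where g=fst, OF pg1 compfst], assumption)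
    apply (rule polyfun_det)
    using pmat_mv[OF pmat_wprod[where W="\<lambda>z. tm_of y0 x0 (fst z)", OF pTp] pdist] unfolding pmat_def pvec_def by simp
  have hps: "hp (\<theta>s, \<lambda>_. 1 / real CARD('x)) \<noteq> 0"
  proof -
    let ?c = "1 / real CARD('x)"
    have "det (\<chi> i. wprod (?T \<theta>s) (vs i) *v dist_of x0 (\<lambda>_. ?c)) = det (\<chi> i. ?c *s (\<chi> x. lam x ^ e i))"
      unfolding T\<theta>s Ws_def vs_def wprod_Wst dist_of_unif diagm_mv ..
    also have "\<dots> = ?c ^ CARD('x) * det (\<chi> i x. lam x ^ e i)"
      by (rule det_scale_rows)
    finally have "det (\<chi> i. wprod (?T \<theta>s) (vs i) *v dist_of x0 (\<lambda>_. ?c)) \<noteq> 0"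
      using vander_det[OF inj_lam e] by simp
    then show ?thesis using g1s unfolding hp_def by simp
  qed
  have AE1: "AE z in PiM (tm_coords y0 x0) (\<lambda>_. lborel::real measure) \<Otimes>\<^sub>M PiM (UNIV - {x0}) (\<lambda>_. lborel::real measure). hp z \<noteq> 0"
    by (rule polyfun_AE_pair[OF _ _ php hps]) auto
  have part1: "AE z in PiM (tm_coords y0 x0) (\<lambda>_. lborel::real measure) \<Otimes>\<^sub>M PiM (UNIV - {x0}) (\<lambda>_. lborel::real measure).
            transition_matrix (?T (fst z)) \<and> prob_vec (dist_of x0 (snd z)) \<longrightarrow>
              KW (?T (fst z)) = {0} \<and>
              Vk (?T (fst z)) (dist_of x0 (snd z))
                 (kPW (dist_of x0 (snd z)) (?T (fst z))) = UNIV"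
    using AE1
  proof eventually_elim
    case (elim z)
    then have n1: "g1 (fst z) \<noteq> 0" and
      n2: "det (\<chi> i. wprod (?T (fst z)) (vs i) *v dist_of x0 (snd z)) \<noteq> 0"
      by (auto simp: hp_def)
    have cs: "colsum1 (?T (fst z))" unfolding colsum1_def using colsum_tm_of by blast
    show ?case
    proof (intro impI conjI)
      show "KW (?T (fst z)) = {0}"
        by (rule KW_zero[OF cs _ lenws L1]) (use n1 in \<open>simp add: g1_def\<close>)
      show "Vk (?T (fst z)) (dist_of x0 (snd z)) (kPW (dist_of x0 (snd z)) (?T (fst z))) = UNIV"
        by (rule Vk_full[OF n2 lenvs L1])
    qed
  qed
  show ?thesis using part1 part2 by blast
qed


end
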